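(* For every $k\in\mathbb{N}$, every $v\in V^X$ and every $i\in\Pi$, $\sup\{\mathrm{Cost}_i(\rho)\mid\rho\in\Lambda^k(v)\}=\max\{\mathrm{Cost}_i(\rho)\mid\rho\in\Lambda^k(v)\}$, where the maximum is taken in $\mathbb{N}\cup\{+\infty\}$ (i.e., the supremum is attained).
   Context: Let $\mathcal{G}$ be a quantitative reachability game on an arena $G=(\Pi,V,(V_i)_{i\in\Pi},E)$ (finite player set $\Pi$, finite vertex set $V$ with $|V|\ge2$, $|\Pi|\le|V|$, partition $(V_i)$, every vertex has a successor) with targets $F_i\subseteq V$ and costs $\mathrm{Cost}_i(\rho)=$ least $k$ with $\rho_k\in F_i$ (or $+\infty$); $v_0\in V$. Extended game: arena $X$ with vertices $V^X=V\times2^\Pi$, edges $((v,I),(v',I'))\in E^X$ iff $(v,v')\in E$ and $I'=I\cup\{i:v'\in F_i\}$, $(v,I)\in V^X_i$ iff $v\in V_i$, targets $F^X_i=\{(v,I):i\in I\}$ with corresponding reachability costs $\mathrm{Cost}_i$; $x_0=(v_0,\{i:v_0\in F_i\})$; $I(u)$ is the second component. $\mathcal{I}$ is the set of $I$ with some $(v,I)$ reachable from $x_0$, $N=|\mathcal{I}|$, $J_1<\dots<J_N$ a fixed total order of $\mathcal{I}$ extending $I<I'$ iff $I\ne I'$ and some $(v',I')$ is reachable from some $(v,I)$. $V^{\ge J_n}=\{(v,J_m):v\in V,m\ge n\}$. Labelings: for $\lambda:V^X\to\mathbb{N}\cup\{+\infty\}$, a play $\rho$ of $X$ is $\lambda$-consistent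 if $\mathrm{Cost}_i(\rho_{\ge n})\le\lambda(\rho_n)$ whenever $\rho_n\in V^X_i$. $\lambda^0(u)=0$ if $u\in V^X_i$ and $i\in I(u)$, else $+\infty$. The update of $\lambda^k$ w.r.t. $V^{\ge J_n}$ keeps values outside $V^{\ge J_n}$ and for $u\in V^{\ge J_n}\cap V^X_i$ sets $\lambda^{k+1}(u)=0$ if $i\in I(u)$, otherwise $1+\min_{(u,u')\in E^X}\sup\{\mathrm{Cost}_i(\rho):\rho\in\Lambda^k(u')\}$ ($1+(+\infty)=+\infty$). The sequence is generated by $n_0=N$, $\lambda^{k+1}=$ update of $\lambda^k$ w.r.t. $V^{\ge J_{n_k}}$, $n_{k+1}=n_k-1$ if $\lambda^{k+1}=\lambda^k$ and $n_k>1$, else $n_{k+1}=n_k$. $\Lambda^k(v)$ is the set of $\lambda^k$-consistent plays from $v$. *)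

theory Defs
  imports Main "HOL-Library.Extended_Nat"
begin

definition arena :: "'p set \<Rightarrow> 'v set \<Rightarrow> ('p \<Rightarrow> 'v set) \<Rightarrow> ('v \<times> 'v) set \<Rightarrow> bool" where
  "arena Pi V Vp E \<longleftrightarrow>
     finite Pi \<and> finite V \<and> card V \<ge> 2 \<and> card Pi \<le> card V \<and>
     (\<forall>i\<in>Pi. Vp i \<subseteq> V) \<and> (\<Union>i\<in>Pi. Vp i) = V \<and>
     (\<forall>i\<in>Pi. \<forall>j\<in>Pi. i \<noteq> j \<longrightarrow> Vp i \<inter> Vp j = {}) \<and>
     E \<subseteq> V \<times> V \<and> (\<forall>v\<in>V. \<exists>v'. (v, v') \<in> E)"

definition cost :: "'a set \<Rightarrow> (nat \<Rightarrow> 'a) \<Rightarrow> enat" where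
  "cost T \<rho> = (if \<exists>k. \<rho> k \<in> T then enat (LEAST k. \<rho> k \<in> T) else \<infinity>)"

definition VX :: "'v set \<Rightarrow> 'p set \<Rightarrow> ('v \<times> 'p set) set" where
  "VX V Pi = V \<times> Pow Pi"

definition EdgX :: "'p set \<Rightarrow> ('v \<times> 'v) set \<Rightarrow> ('p \<Rightarrow> 'v set) \<Rightarrow> (('v \<times> 'p set) \<times> ('v \<times> 'p set)) set" where
  "EdgX Pi E F = {((v, I), (v', I')). (v, v') \<in> E \<and> I \<subseteq> Pi \<and> I' = I \<union> {i \<in> Pi. v' \<in> F i}}"

definition VXi :: "'v set \<Rightarrow> 'p set \<Rightarrow> ('p \<Rightarrow> 'v set) \<Rightarrow> 'p \<Rightarrow> ('v \<times> 'p set) set" where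
  "VXi V Pi Vp i = {(v, I) \<in> VX V Pi. v \<in> Vp i}"

definition FX :: "'p \<Rightarrow> ('v \<times> 'p set) set" where
  "FX i = {(v, I). i \<in> I}"

definition x0 :: "'p set \<Rightarrow> ('p \<Rightarrow> 'v set) \<Rightarrow> 'v \<Rightarrow> 'v \<times> 'p set" where
  "x0 Pi F v0 = (v0, {i \<in> Pi. v0 \<in> F i})"

definition playX :: "'p set \<Rightarrow> ('v \<times> 'v) set \<Rightarrow> ('p \<Rightarrow> 'v set) \<Rightarrow> (nat \<Rightarrow> 'v \<times> 'p set) \<Rightarrow> bool" where
  "playX Pi E F \<rho> \<longleftrightarrow> (\<forall>n. (\<rho> n, \<rho> (Suc n)) \<in> EdgX Pi E F)"

definition reachI :: "'p set \<Rightarrow> ('v \<times> 'v) set \<Rightarrow> ('p \<Rightarrow> 'v set) \<Rightarrow> 'v \<Rightarrow> 'p set set" where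
  "reachI Pi E F v0 = {I. \<exists>v. (x0 Pi F v0, (v, I)) \<in> (EdgX Pi E F)\<^sup>*}"

definition valid_order :: "'p set \<Rightarrow> ('v \<times> 'v) set \<Rightarrow> ('p \<Rightarrow> 'v set) \<Rightarrow> 'v \<Rightarrow> (nat \<Rightarrow> 'p set) \<Rightarrow> bool" where
  "valid_order Pi E F v0 J \<longleftrightarrow>
     bij_betw J {1..card (reachI Pi E F v0)} (reachI Pi E F v0) \<and>
     (\<forall>m\<in>{1..card (reachI Pi E F v0)}. \<forall>n\<in>{1..card (reachI Pi E F v0)}.
        J m \<noteq> J n \<and> (\<exists>v v'. ((v, J m), (v', J n)) \<in> (EdgX Pi E F)\<^sup>*) \<longrightarrow> m < n)"

definition Vge :: "'v set \<Rightarrow> 'p set \<Rightarrow> ('v \<times> 'v) set \<Rightarrow> ('p \<Rightarrow> 'v set) \<Rightarrow> 'v \<Rightarrow> (nat \<Rightarrow> 'p set) \<Rightarrow> nat \<Rightarrow> ('v \<times> 'p set) set" where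
  "Vge V Pi E F v0 J n = {(v, J m) | v m. v \<in> V \<and> n \<le> m \<and> m \<le> card (reachI Pi E F v0)}"

type_synonym ('v, 'p) labeling = "'v \<times> 'p set \<Rightarrow> enat"

definition lam0 :: "'v set \<Rightarrow> 'p set \<Rightarrow> ('p \<Rightarrow> 'v set) \<Rightarrow> ('v, 'p) labeling" where
  "lam0 V Pi Vp u = (if \<exists>i\<in>Pi. u \<in> VXi V Pi Vp i \<and> i \<in> snd u then 0 else \<infinity>)"

definition Lambda :: "'v set \<Rightarrow> 'p set \<Rightarrow> ('p \<Rightarrow> 'v set) \<Rightarrow> ('v \<times> 'v) set \<Rightarrow> ('p \<Rightarrow> 'v set)
    \<Rightarrow> ('v, 'p) labeling \<Rightarrow> 'v \<times> 'p set \<Rightarrow> (nat \<Rightarrow> 'v \<times> 'p set) set" where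
  "Lambda V Pi Vp E F lam u =
     {\<rho>. playX Pi E F \<rho> \<and> \<rho> 0 = u \<and>
          (\<forall>n. \<forall>i\<in>Pi. \<rho> n \<in> VXi V Pi Vp i \<longrightarrow> cost (FX i) (\<lambda>m. \<rho> (n + m)) \<le> lam (\<rho> n))}"

definition update :: "'v set \<Rightarrow> 'p set \<Rightarrow> ('p \<Rightarrow> 'v set) \<Rightarrow> ('v \<times> 'v) set \<Rightarrow> ('p \<Rightarrow> 'v set) \<Rightarrow> 'v
    \<Rightarrow> (nat \<Rightarrow> 'p set) \<Rightarrow> ('v, 'p) labeling \<Rightarrow> nat \<Rightarrow> ('v, 'p) labeling" where
  "update V Pi Vp E F v0 J lam n u =
     (if u \<in> Vge V Pi E F v0 J n then
        (let i = (THE i. i \<in> Pi \<and> u \<in> VXi V Pi Vp i) in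
          if i \<in> snd u then 0
          else 1 + (INF u'\<in>{u'. (u, u') \<in> EdgX Pi E F}.
                      Sup (cost (FX i) ` Lambda V Pi Vp E F lam u')))
      else lam u)"

fun labseq :: "'v set \<Rightarrow> 'p set \<Rightarrow> ('p \<Rightarrow> 'v set) \<Rightarrow> ('v \<times> 'v) set \<Rightarrow> ('p \<Rightarrow> 'v set) \<Rightarrow> 'v
    \<Rightarrow> (nat \<Rightarrow> 'p set) \<Rightarrow> nat \<Rightarrow> ('v, 'p) labeling \<times> nat" where
  "labseq V Pi Vp E F v0 J 0 = (lam0 V Pi Vp, card (reachI Pi E F v0))"
| "labseq V Pi Vp E F v0 J (Suc k) =
     (let (lam, n) = labseq V Pi Vp E F v0 J k;
          lam' = update V Pi Vp E F v0 J lam n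
      in (lam', if lam' = lam \<and> n > 1 then n - 1 else n))"

definition lam :: "'v set \<Rightarrow> 'p set \<Rightarrow> ('p \<Rightarrow> 'v set) \<Rightarrow> ('v \<times> 'v) set \<Rightarrow> ('p \<Rightarrow> 'v set) \<Rightarrow> 'v
    \<Rightarrow> (nat \<Rightarrow> 'p set) \<Rightarrow> nat \<Rightarrow> ('v, 'p) labeling" where
  "lam V Pi Vp E F v0 J k = fst (labseq V Pi Vp E F v0 J k)"

end

theory Submission
  imports Defs
begin


lemma cost_eq_enat: "(\<forall>k<c. \<rho> k \<notin> T) \<Longrightarrow> \<rho> c \<in> T \<Longrightarrow> cost T \<rho> = enat c"
  unfolding cost_def
  by (auto intro!: Least_equality) (meson not_less)

lemma cost_enatD: "cost T \<rho> = enat c \<Longrightarrow> \<rho> c \<in> T \<and> (\<forall>k<c. \<rho> k \<notin> T)"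
  unfolding cost_def
  by (auto split: if_splits intro: LeastI dest: not_less_Least)

lemma cost_inf_iff: "cost T \<rho> = \<infinity> \<longleftrightarrow> (\<forall>k. \<rho> k \<notin> T)"
  unfolding cost_def by auto

lemma cost_le_iff: "cost T \<rho> \<le> enat b \<longleftrightarrow> (\<exists>k\<le>b. \<rho> k \<in> T)"
proof (cases "cost T \<rho>")
  case (enat c)
  have d: "\<rho> c \<in> T" "\<forall>k<c. \<rho> k \<notin> T" using cost_enatD[OF enat] by auto
  show ?thesis
  proof
    assume "cost T \<rho> \<le> enat b" then show "\<exists>k\<le>b. \<rho> k \<in> T" using d enat by auto
  next
    assume "\<exists>k\<le>b. \<rho> k \<in> T"
    then obtain k where "k \<le> b" "\<rho> k \<in> T" by blast
    then have "c \<le> k" using d(2) not_le by blast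
    then show "cost T \<rho> \<le> enat b" using enat \<open>k \<le> b\<close> by simp
  qed
next
  case infinity
  then show ?thesis using cost_inf_iff by auto
qed

lemma cost_0: "\<rho> 0 \<in> T \<Longrightarrow> cost T \<rho> = 0"
  using cost_eq_enat[of 0 \<rho> T] by (simp add: zero_enat_def)

lemma cost_Suc: "\<rho> 0 \<notin> T \<Longrightarrow> cost T \<rho> = eSuc (cost T (\<lambda>n. \<rho> (Suc n)))"
proof (cases "cost T (\<lambda>n. \<rho> (Suc n))")
  case (enat c)
  assume a: "\<rho> 0 \<notin> T"
  have "cost T \<rho> = enat (Suc c)"
    using cost_enatD[OF enat] a by (intro cost_eq_enat) (auto simp: less_Suc_eq_0_disj)
  then show ?thesis using enat by (simp add: eSuc_enat)
next
  case infinity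
  assume a: "\<rho> 0 \<notin> T"
  have "\<forall>k. \<rho> k \<notin> T" using infinity a unfolding cost_inf_iff by (metis not0_implies_Suc)
  then show ?thesis using infinity by (simp add: cost_inf_iff[of T \<rho>])
qed

lemma cost_agree: "\<forall>j<m. \<rho> j = \<sigma> j \<Longrightarrow> cost T \<sigma> < enat m \<Longrightarrow> cost T \<rho> = cost T \<sigma>"
proof -
  assume ag: "\<forall>j<m. \<rho> j = \<sigma> j" and lt: "cost T \<sigma> < enat m"
  then obtain c where c: "cost T \<sigma> = enat c" "c < m"
    by (cases "cost T \<sigma>") auto
  show ?thesis using cost_enatD[OF c(1)] c ag by (auto intro!: cost_eq_enat)
qed

lemma konig:
  fixes S :: "nat \<Rightarrow> (nat \<Rightarrow> 'a) set" and A :: "'a set"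
  assumes fin: "finite A" and ne: "\<And>m. S m \<noteq> {}" and dec: "\<And>m. S (Suc m) \<subseteq> S m"
    and inA: "\<And>m \<rho> n. \<rho> \<in> S m \<Longrightarrow> \<rho> n \<in> A"
  shows "\<exists>r. \<forall>m. \<exists>\<rho>\<in>S m. \<forall>j<m. \<rho> j = r j"
proof -
  have mono: "S m' \<subseteq> S m" if "m \<le> m'" for m m'
    using that
  proof (induction m' rule: dec_induct)
    case base then show ?case by (rule order.refl)
  next
    case (step n) then show ?case using dec[of n] by blast
  qed
  define ag where "ag p \<rho> \<longleftrightarrow> (\<forall>j<length p. \<rho> j = p ! j)" for p :: "'a list" and \<rho> :: "nat \<Rightarrow> 'a"
  define good where "good p \<longleftrightarrow> (\<forall>m. \<exists>\<rho>\<in>S m. ag p \<rho>)" for p :: "'a list"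
  have g0: "good []" unfolding good_def
  proof
    fix m obtain \<rho> where "\<rho> \<in> S m" using ne[of m] by blast
    moreover have "ag [] \<rho>" unfolding ag_def by simp
    ultimately show "\<exists>\<rho>\<in>S m. ag [] \<rho>" by blast
  qed
  have gs: "\<exists>a. good (p @ [a])" if gp: "good p" for p
  proof (rule ccontr)
    assume nn: "\<not> (\<exists>a. good (p @ [a]))"
    have "\<forall>a. \<exists>m. \<not> (\<exists>\<rho>\<in>S m. ag (p @ [a]) \<rho>)"
    proof
      fix a show "\<exists>m. \<not> (\<exists>\<rho>\<in>S m. ag (p @ [a]) \<rho>)" using nn unfolding good_def by blast
    qed
    then obtain f where f: "\<And>a. \<not> (\<exists>\<rho>\<in>S (f a). ag (p @ [a]) \<rho>)"
      by (metis choice)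
    define M where "M = (\<Sum>a\<in>A. f a)"
    obtain \<rho> where \<rho>: "\<rho> \<in> S M" "ag p \<rho>" using gp unfolding good_def by blast
    define a where "a = \<rho> (length p)"
    have aA: "a \<in> A" using inA \<rho>(1) a_def by blast
    have "f a \<le> M" unfolding M_def using fin aA by (intro member_le_sum) auto
    then have "\<rho> \<in> S (f a)" using mono \<rho>(1) by blast
    moreover have "ag (p @ [a]) \<rho>"
      using \<rho>(2) a_def unfolding ag_def by (auto simp: nth_append less_Suc_eq)
    ultimately show False using f by blast
  qed
  define pr where "pr = rec_nat [] (\<lambda>n p. p @ [SOME a. good (p @ [a])])"
  have pr0: "pr 0 = []" and prS: "pr (Suc n) = pr n @ [SOME a. good (pr n @ [a])]" for n
    unfolding pr_def by simp_all
  have gpr: "good (pr n)" for n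
  proof (induction n)
    case 0 then show ?case using g0 pr0 by simp
  next
    case (Suc n) then show ?case unfolding prS by (rule someI_ex[OF gs])
  qed
  have lpr: "length (pr n) = n" for n by (induction n) (auto simp: pr0 prS)
  have npr: "pr m ! j = pr (Suc j) ! j" if "j < m" for m j
    using that
  proof (induction m)
    case 0 then show ?case by simp
  next
    case (Suc m)
    show ?case
    proof (cases "j = m")
      case True then show ?thesis by simp
    next
      case False
      then have "j < m" using Suc.prems by simp
      then have "pr (Suc m) ! j = pr m ! j" unfolding prS by (simp add: nth_append lpr)
      then show ?thesis using Suc.IH \<open>j < m\<close> by simp
    qed
  qed
  define r where "r j = pr (Suc j) ! j" for j
  show ?thesis
  proof (intro exI allI)
    fix m
    obtain \<rho> where r1: "\<rho> \<in> S m" and r2: "ag (pr m) \<rho>" using gpr unfolding good_def by blast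
    have "\<forall>j<m. \<rho> j = r j"
    proof (intro allI impI)
      fix j assume "j < m"
      then have "\<rho> j = pr m ! j" using r2 lpr unfolding ag_def by simp
      then show "\<rho> j = r j" using npr[OF \<open>j < m\<close>] r_def by simp
    qed
    then show "\<exists>\<rho>\<in>S m. \<forall>j<m. \<rho> j = r j" using r1 by blast
  qed
qed



definition own :: "'p set \<Rightarrow> ('p \<Rightarrow> 'v set) \<Rightarrow> 'v \<times> 'p set \<Rightarrow> 'p" where
  "own Pi Vp x = (SOME i. i \<in> Pi \<and> fst x \<in> Vp i)"

definition nx :: "'p set \<Rightarrow> ('v \<times> 'v) set \<Rightarrow> ('p \<Rightarrow> 'v set) \<Rightarrow> 'v \<times> 'p set \<Rightarrow> 'v \<times> 'p set" where
  "nx Pi E F x = (SOME y. (x, y) \<in> EdgX Pi E F)"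

fun outp :: "'p set \<Rightarrow> ('p \<Rightarrow> 'v set) \<Rightarrow> ('v \<times> 'v) set \<Rightarrow> ('p \<Rightarrow> 'v set) \<Rightarrow> nat
    \<Rightarrow> 'v \<times> 'p set \<Rightarrow> nat \<Rightarrow> 'v \<times> 'p set" where
  "outp Pi Vp E F 0 x = (\<lambda>n. (nx Pi E F ^^ n) x)"
| "outp Pi Vp E F (Suc h) x =
     (let b = (SOME y. (x, y) \<in> EdgX Pi E F \<and> (\<forall>y'. (x, y') \<in> EdgX Pi E F \<longrightarrow>
                 cost (FX (own Pi Vp x)) (outp Pi Vp E F h y) \<le> cost (FX (own Pi Vp x)) (outp Pi Vp E F h y')))
      in (\<lambda>n. case n of 0 \<Rightarrow> x | Suc m \<Rightarrow> outp Pi Vp E F h b m))"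

definition bst :: "'p set \<Rightarrow> ('p \<Rightarrow> 'v set) \<Rightarrow> ('v \<times> 'v) set \<Rightarrow> ('p \<Rightarrow> 'v set) \<Rightarrow> nat
    \<Rightarrow> 'v \<times> 'p set \<Rightarrow> 'v \<times> 'p set" where
  "bst Pi Vp E F h x = (SOME y. (x, y) \<in> EdgX Pi E F \<and> (\<forall>y'. (x, y') \<in> EdgX Pi E F \<longrightarrow>
                 cost (FX (own Pi Vp x)) (outp Pi Vp E F h y) \<le> cost (FX (own Pi Vp x)) (outp Pi Vp E F h y')))"

lemma outp_Suc: "outp Pi Vp E F (Suc h) x = (\<lambda>n. case n of 0 \<Rightarrow> x | Suc m \<Rightarrow> outp Pi Vp E F h (bst Pi Vp E F h x) m)"
  by (simp only: outp.simps Let_def bst_def)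

lemma outp_0: "outp Pi Vp E F h x 0 = x"
  by (cases h) (simp_all add: outp_Suc)

definition Pp :: "'p set \<Rightarrow> ('p \<Rightarrow> 'v set) \<Rightarrow> ('v \<times> 'v) set \<Rightarrow> ('p \<Rightarrow> 'v set)
    \<Rightarrow> 'v \<times> 'p set \<Rightarrow> (nat \<Rightarrow> 'v \<times> 'p set) set" where
  "Pp Pi Vp E F x = {\<rho>. \<rho> 0 = x \<and> (\<forall>m. \<exists>h\<ge>m. \<forall>j<m. \<rho> j = outp Pi Vp E F h x j)}"

lemma Inf_enat_in: "A \<noteq> {} \<Longrightarrow> Inf A \<in> (A :: enat set)"
  unfolding Inf_enat_def by (auto intro: LeastI)

lemma Lambda_closed:
  assumes "\<forall>m. \<exists>\<rho>\<in>Lambda V Pi Vp E F L u. \<forall>j<m. \<rho> j = r j"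
  shows "r \<in> Lambda V Pi Vp E F L u"
proof -
  have r0: "r 0 = u"
  proof -
    obtain \<rho> where "\<rho> \<in> Lambda V Pi Vp E F L u" "\<forall>j<1. \<rho> j = r j" using assms by blast
    then show ?thesis unfolding Lambda_def by auto
  qed
  have pl: "playX Pi E F r" unfolding playX_def
  proof
    fix n
    obtain \<rho> where r1: "\<rho> \<in> Lambda V Pi Vp E F L u" and r2: "\<forall>j<Suc (Suc n). \<rho> j = r j" using assms by blast
    have "(\<rho> n, \<rho> (Suc n)) \<in> EdgX Pi E F" using r1 unfolding Lambda_def playX_def by blast
    moreover have "\<rho> n = r n" "\<rho> (Suc n) = r (Suc n)" using r2 by auto
    ultimately show "(r n, r (Suc n)) \<in> EdgX Pi E F" by simp
  qed
  have co: "cost (FX i) (\<lambda>m. r (n + m)) \<le> L (r n)" if "i \<in> Pi" "r n \<in> VXi V Pi Vp i" for n i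
  proof (cases "L (r n)")
    case (enat b)
    obtain \<rho> where \<rho>: "\<rho> \<in> Lambda V Pi Vp E F L u" "\<forall>j<Suc (n + b). \<rho> j = r j" using assms by blast
    then have "\<rho> n = r n" by simp
    moreover have "\<forall>n. \<forall>i\<in>Pi. \<rho> n \<in> VXi V Pi Vp i \<longrightarrow> cost (FX i) (\<lambda>m. \<rho> (n + m)) \<le> L (\<rho> n)"
      using \<rho>(1) unfolding Lambda_def by blast
    ultimately have "cost (FX i) (\<lambda>m. \<rho> (n + m)) \<le> enat b" using that enat by metis
    then obtain k where k: "k \<le> b" "\<rho> (n + k) \<in> FX i" unfolding cost_le_iff by blast
    then have "r (n + k) \<in> FX i" using \<rho>(2) by simp
    then have "cost (FX i) (\<lambda>m. r (n + m)) \<le> enat b" unfolding cost_le_iff using k(1) by blast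
    then show ?thesis using enat by simp
  qed simp
  show ?thesis unfolding Lambda_def using r0 pl co by blast
qed




declare outp.simps(2)[simp del]

locale G =
  fixes Pi :: "'p set" and V :: "'v set" and Vp :: "'p \<Rightarrow> 'v set"
    and E :: "('v \<times> 'v) set" and F :: "'p \<Rightarrow> 'v set"
  assumes ar: "arena Pi V Vp E"
begin

abbreviation "EG \<equiv> EdgX Pi E F"
abbreviation "out \<equiv> outp Pi Vp E F"
abbreviation "bs \<equiv> bst Pi Vp E F"
abbreviation "P \<equiv> Pp Pi Vp E F"

lemma arE: "E \<subseteq> V \<times> V" "\<forall>v\<in>V. \<exists>v'. (v, v') \<in> E" "finite V" "finite Pi"
  "\<forall>i\<in>Pi. \<forall>j\<in>Pi. i \<noteq> j \<longrightarrow> Vp i \<inter> Vp j = {}"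
  using ar unfolding arena_def by blast+

lemma edge_VX: "(x, y) \<in> EG \<Longrightarrow> y \<in> VX V Pi"
  using arE(1) unfolding EdgX_def VX_def by auto

lemma succ_ex: "x \<in> VX V Pi \<Longrightarrow> \<exists>y. (x, y) \<in> EG"
proof -
  assume "x \<in> VX V Pi"
  then obtain v I where x: "x = (v, I)" "v \<in> V" "I \<subseteq> Pi" unfolding VX_def by auto
  then obtain v' where "(v, v') \<in> E" using arE(2) by blast
  then have "(x, (v', I \<union> {i \<in> Pi. v' \<in> F i})) \<in> EG" using x unfolding EdgX_def by auto
  then show ?thesis by blast
qed

lemma finVX: "finite (VX V Pi)"
  using arE(3,4) unfolding VX_def by auto

lemma uniq: "i \<in> Pi \<Longrightarrow> i' \<in> Pi \<Longrightarrow> v \<in> Vp i \<Longrightarrow> v \<in> Vp i' \<Longrightarrow> i = i'"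
  using arE(5) by blast

lemma own_eq: "i \<in> Pi \<Longrightarrow> fst x \<in> Vp i \<Longrightarrow> own Pi Vp x = i"
  unfolding own_def by (rule some_equality) (auto dest: uniq)

lemma bst_prop:
  assumes "x \<in> VX V Pi"
  shows "(x, bs h x) \<in> EG \<and> (\<forall>y'. (x, y') \<in> EG \<longrightarrow>
     cost (FX (own Pi Vp x)) (out h (bs h x)) \<le> cost (FX (own Pi Vp x)) (out h y'))"
proof -
  define f where "f y = cost (FX (own Pi Vp x)) (out h y)" for y
  define c where "c = (LEAST c. \<exists>y. (x, y) \<in> EG \<and> f y = c)"
  obtain y0 where y0: "(x, y0) \<in> EG" using succ_ex assms by blast
  have "\<exists>c'. \<exists>y. (x, y) \<in> EG \<and> f y = c'" using y0 by blast
  then have "\<exists>y. (x, y) \<in> EG \<and> f y = c" unfolding c_def by (rule LeastI_ex)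
  then obtain y where y: "(x, y) \<in> EG" "f y = c" by blast
  have "\<forall>y'. (x, y') \<in> EG \<longrightarrow> f y \<le> f y'"
  proof (intro allI impI)
    fix y' assume "(x, y') \<in> EG"
    then have "\<exists>y. (x, y) \<in> EG \<and> f y = f y'" by blast
    then have "c \<le> f y'" unfolding c_def by (rule Least_le)
    then show "f y \<le> f y'" using y(2) by simp
  qed
  then have "\<exists>y. (x, y) \<in> EG \<and> (\<forall>y'. (x, y') \<in> EG \<longrightarrow> f y \<le> f y')" using y by blast
  then show ?thesis unfolding bst_def f_def by (rule someI_ex)
qed

lemma nx_VX: assumes "x \<in> VX V Pi" shows "(x, nx Pi E F x) \<in> EG"
  unfolding nx_def using succ_ex[OF assms] by (rule someI_ex)

lemma outp_props: "x \<in> VX V Pi \<Longrightarrow> out h x n \<in> VX V Pi \<and> (out h x n, out h x (Suc n)) \<in> EG"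
proof (induction h arbitrary: x n)
  case 0
  have "(nx Pi E F ^^ n) x \<in> VX V Pi" for n
  proof (induction n)
    case 0 then show ?case using \<open>x \<in> VX V Pi\<close> by simp
  next
    case (Suc n) then show ?case using nx_VX edge_VX by (metis funpow.simps(2) comp_apply)
  qed
  then show ?case using nx_VX by simp
next
  case (Suc h)
  have b: "(x, bs h x) \<in> EG" using bst_prop Suc.prems by blast
  then have bv: "bs h x \<in> VX V Pi" by (rule edge_VX)
  show ?case
  proof (cases n)
    case 0
    then show ?thesis using Suc.prems b by (simp add: outp_Suc outp_0)
  next
    case (Suc m)
    then show ?thesis using Suc.IH[OF bv, of m] by (simp add: outp_Suc)
  qed
qed


end



context G begin

lemma P_valid:
  assumes "x \<in> VX V Pi" "\<rho> \<in> P x"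
  shows "\<rho> n \<in> VX V Pi \<and> (\<rho> n, \<rho> (Suc n)) \<in> EG"
proof -
  obtain h where "\<forall>j<Suc (Suc n). \<rho> j = out h x j" using assms(2) unfolding Pp_def by blast
  then show ?thesis using outp_props[OF assms(1), of h n] by simp
qed

lemma P_ne:
  assumes "x \<in> VX V Pi"
  shows "P x \<noteq> {}"
proof -
  define S where "S m = {out h x | h. h \<ge> m}" for m
  have "\<exists>r. \<forall>m. \<exists>\<rho>\<in>S m. \<forall>j<m. \<rho> j = r j"
  proof (rule konig[OF finVX])
    show "S m \<noteq> {}" for m unfolding S_def by blast
    show "S (Suc m) \<subseteq> S m" for m unfolding S_def by (auto intro: Suc_leD)
    show "\<rho> n \<in> VX V Pi" if "\<rho> \<in> S m" for m \<rho> n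
      using that outp_props[OF assms] unfolding S_def by blast
  qed
  then obtain r where r: "\<forall>m. \<exists>\<rho>\<in>S m. \<forall>j<m. \<rho> j = r j" by blast
  have "r \<in> P x" unfolding Pp_def
  proof (intro CollectI conjI allI)
    obtain \<rho> where r1: "\<rho> \<in> S 1" and r2: "\<forall>j<1. \<rho> j = r j" using r by blast
    from r1 obtain h where "\<rho> = out h x" unfolding S_def by blast
    then have "\<rho> 0 = x" using outp_0 by simp
    moreover have "\<rho> 0 = r 0" using r2 by simp
    ultimately show "r 0 = x" by simp
    fix m
    obtain \<rho> where r1: "\<rho> \<in> S m" and r2: "\<forall>j<m. \<rho> j = r j" using r by blast
    from r1 obtain h where h: "\<rho> = out h x" "h \<ge> m" unfolding S_def by blast
    then show "\<exists>h\<ge>m. \<forall>j<m. r j = out h x j" using r2 by auto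
  qed
  then show ?thesis by blast
qed

lemma P_suffix1:
  assumes "x \<in> VX V Pi" "\<rho> \<in> P x"
  shows "(\<lambda>n. \<rho> (Suc n)) \<in> P (\<rho> 1)"
  unfolding Pp_def
proof (intro CollectI conjI allI)
  show "\<rho> (Suc 0) = \<rho> 1" by simp
  fix m
  obtain h where h: "h \<ge> Suc (Suc m)" "\<forall>j<Suc (Suc m). \<rho> j = out h x j"
    using assms(2) unfolding Pp_def by blast
  then obtain h' where h': "h = Suc h'" by (cases h) auto
  have e: "out h x (Suc j) = out h' (bs h' x) j" for j unfolding h' outp_Suc by simp
  have r1: "\<rho> 1 = bs h' x"
  proof -
    have "\<rho> 1 = out h x 1" using h(2) by simp
    also have "\<dots> = bs h' x" using e[of 0] outp_0 by simp
    finally show ?thesis .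
  qed
  have "\<forall>j<m. \<rho> (Suc j) = out h' (\<rho> 1) j"
  proof (intro allI impI)
    fix j assume "j < m"
    then have "\<rho> (Suc j) = out h x (Suc j)" using h(2) by simp
    then show "\<rho> (Suc j) = out h' (\<rho> 1) j" using e r1 by simp
  qed
  moreover have "h' \<ge> m" using h(1) h' by simp
  ultimately show "\<exists>h\<ge>m. \<forall>j<m. \<rho> (Suc j) = out h (\<rho> 1) j" by blast
qed

lemma P_suffix:
  assumes "x \<in> VX V Pi" "\<rho> \<in> P x"
  shows "(\<lambda>m. \<rho> (n + m)) \<in> P (\<rho> n)"
proof (induction n)
  case 0
  have "\<rho> 0 = x" using assms(2) unfolding Pp_def by blast
  then show ?case using assms by simp
next
  case (Suc n)
  have v: "\<rho> n \<in> VX V Pi" using P_valid[OF assms] by blast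
  have "(\<lambda>m. \<rho> (n + Suc m)) \<in> P (\<rho> (n + 1))"
    using P_suffix1[OF v Suc.IH] by simp
  then show ?case by simp
qed

lemma P_key:
  assumes x: "x \<in> VX V Pi" and \<rho>: "\<rho> \<in> P x" and i: "i \<in> Pi" "fst x \<in> Vp i" "i \<notin> snd x"
    and y: "(x, y) \<in> EG"
  shows "\<exists>\<pi>\<in>P y. cost (FX i) \<rho> \<le> eSuc (cost (FX i) \<pi>)"
proof -
  have yv: "y \<in> VX V Pi" using y by (rule edge_VX)
  define S where "S m = {out h' y | h'. h' \<ge> m \<and> (\<forall>j<Suc m. \<rho> j = out (Suc h') x j)}" for m
  have "\<exists>r. \<forall>m. \<exists>\<sigma>\<in>S m. \<forall>j<m. \<sigma> j = r j"
  proof (rule konig[OF finVX])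
    show "S m \<noteq> {}" for m
    proof -
      obtain h where h: "h \<ge> Suc m" "\<forall>j<Suc m. \<rho> j = out h x j" using \<rho> unfolding Pp_def by blast
      then obtain h' where "h = Suc h'" by (cases h) auto
      then show ?thesis using h unfolding S_def by auto
    qed
    show "S (Suc m) \<subseteq> S m" for m unfolding S_def by (auto intro: Suc_leD)
    show "\<sigma> n \<in> VX V Pi" if "\<sigma> \<in> S m" for m \<sigma> n
      using that outp_props[OF yv] unfolding S_def by blast
  qed
  then obtain r where r: "\<forall>m. \<exists>\<sigma>\<in>S m. \<forall>j<m. \<sigma> j = r j" by blast
  have rP: "r \<in> P y" unfolding Pp_def
  proof (intro CollectI conjI allI)
    obtain \<sigma> where r1: "\<sigma> \<in> S 1" and r2: "\<forall>j<1. \<sigma> j = r j" using r by blast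
    from r1 obtain h where "\<sigma> = out h y" unfolding S_def by blast
    then have "\<sigma> 0 = y" using outp_0 by simp
    moreover have "\<sigma> 0 = r 0" using r2 by simp
    ultimately show "r 0 = y" by simp
    fix m
    obtain \<sigma> where r1: "\<sigma> \<in> S m" and r2: "\<forall>j<m. \<sigma> j = r j" using r by blast
    from r1 obtain h where h: "\<sigma> = out h y" "h \<ge> m" unfolding S_def by blast
    then show "\<exists>h\<ge>m. \<forall>j<m. r j = out h y j" using r2 by auto
  qed
  have "cost (FX i) \<rho> \<le> eSuc (cost (FX i) r)"
  proof (cases "cost (FX i) r")
    case (enat c)
    obtain \<sigma> where \<sigma>: "\<sigma> \<in> S (Suc (Suc c))" "\<forall>j<Suc (Suc c). \<sigma> j = r j" using r by blast
    then obtain h' where h': "\<sigma> = out h' y" "\<forall>j<Suc (Suc (Suc c)). \<rho> j = out (Suc h') x j"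
      unfolding S_def by blast
    have c1: "cost (FX i) (out h' y) = enat c"
      using cost_agree[of "Suc (Suc c)" "out h' y" r "FX i"] \<sigma>(2) h'(1) enat by simp
    have own: "own Pi Vp x = i" using own_eq i by blast
    have x0: "out (Suc h') x 0 \<notin> FX i" using i(3) by (cases x) (simp add: outp_0 FX_def)
    have "cost (FX i) (out (Suc h') x) = eSuc (cost (FX i) (out h' (bs h' x)))"
      using cost_Suc[of "out (Suc h') x" "FX i", OF x0] by (simp add: outp_Suc)
    also have "\<dots> \<le> eSuc (cost (FX i) (out h' y))"
      using bst_prop[OF x, of h'] y own by (simp del: split_paired_All)
    also have "\<dots> = enat (Suc c)" using c1 by (simp add: eSuc_enat)
    finally have le: "cost (FX i) (out (Suc h') x) \<le> enat (Suc c)" .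
    have lt: "cost (FX i) (out (Suc h') x) < enat (Suc (Suc (Suc c)))"
      using le by (rule le_less_trans) simp
    have "cost (FX i) \<rho> = cost (FX i) (out (Suc h') x)"
      using cost_agree[of "Suc (Suc (Suc c))" \<rho> "out (Suc h') x" "FX i"] h'(2) lt by blast
    then show ?thesis using le enat by (simp add: eSuc_enat)
  qed simp
  then show ?thesis using rP by blast
qed

end



lemma FX_iff: "u \<in> FX i \<longleftrightarrow> i \<in> snd u"
  by (cases u) (simp add: FX_def)

lemma VXi_fst: "u \<in> VXi V Pi Vp i \<Longrightarrow> fst u \<in> Vp i"
  unfolding VXi_def by auto

lemma lam_0: "lam V Pi Vp E F v0 J 0 = lam0 V Pi Vp"
  unfolding lam_def by simp

lemma lam_Suc: "lam V Pi Vp E F v0 J (Suc k) =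
   update V Pi Vp E F v0 J (lam V Pi Vp E F v0 J k) (snd (labseq V Pi Vp E F v0 J k))"
  unfolding lam_def by (simp add: Let_def split: prod.split)

context G begin

lemma P_play: "x \<in> VX V Pi \<Longrightarrow> \<rho> \<in> P x \<Longrightarrow> playX Pi E F \<rho> \<and> \<rho> 0 = x"
  using P_valid unfolding playX_def Pp_def by blast

lemma P_lam0:
  assumes x: "x \<in> VX V Pi" and \<rho>: "\<rho> \<in> P x"
  shows "\<rho> \<in> Lambda V Pi Vp E F (lam0 V Pi Vp) x"
proof -
  have co: "cost (FX i) (\<lambda>m. \<rho> (n + m)) \<le> lam0 V Pi Vp (\<rho> n)"
    if i: "i \<in> Pi" "\<rho> n \<in> VXi V Pi Vp i" for n i
  proof (cases "i \<in> snd (\<rho> n)")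
    case True
    then have "cost (FX i) (\<lambda>m. \<rho> (n + m)) = 0" by (intro cost_0) (simp add: FX_iff)
    then show ?thesis by simp
  next
    case False
    have "\<not> (\<exists>i'\<in>Pi. \<rho> n \<in> VXi V Pi Vp i' \<and> i' \<in> snd (\<rho> n))"
    proof
      assume "\<exists>i'\<in>Pi. \<rho> n \<in> VXi V Pi Vp i' \<and> i' \<in> snd (\<rho> n)"
      then obtain i' where i': "i' \<in> Pi" "\<rho> n \<in> VXi V Pi Vp i'" "i' \<in> snd (\<rho> n)" by blast
      have "i' = i" using uniq[OF i'(1) i(1) VXi_fst[OF i'(2)] VXi_fst[OF i(2)]] .
      then show False using False i'(3) by simp
    qed
    then have "lam0 V Pi Vp (\<rho> n) = \<infinity>" unfolding lam0_def by simp
    then show ?thesis by simp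
  qed
  show ?thesis unfolding Lambda_def using P_play[OF x \<rho>] co by blast
qed

lemma P_update:
  assumes IH: "\<forall>x\<in>VX V Pi. P x \<subseteq> Lambda V Pi Vp E F L x"
    and x: "x \<in> VX V Pi" and \<rho>: "\<rho> \<in> P x"
  shows "\<rho> \<in> Lambda V Pi Vp E F (update V Pi Vp E F v0 J L n) x"
proof -
  have rL: "\<rho> \<in> Lambda V Pi Vp E F L x" using IH x \<rho> by blast
  have co: "cost (FX i) (\<lambda>m. \<rho> (j + m)) \<le> update V Pi Vp E F v0 J L n (\<rho> j)"
    if i: "i \<in> Pi" "\<rho> j \<in> VXi V Pi Vp i" for j i
  proof -
    define y where "y = \<rho> j"
    define \<tau> where "\<tau> = (\<lambda>m. \<rho> (j + m))"
    have yv: "y \<in> VX V Pi" unfolding y_def by (rule conjunct1[OF P_valid[OF x \<rho>]])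
    have \<tau>P: "\<tau> \<in> P y" using P_suffix[OF x \<rho>] unfolding y_def \<tau>_def .
    have iy: "i \<in> Pi" "y \<in> VXi V Pi Vp i" unfolding y_def using i by simp_all
    have fy: "fst y \<in> Vp i" using VXi_fst[OF iy(2)] .
    show ?thesis
    proof (cases "y \<in> Vge V Pi E F v0 J n")
      case False
      then have "update V Pi Vp E F v0 J L n y = L y" unfolding update_def by (simp only: if_False)
      moreover have "cost (FX i) \<tau> \<le> L y"
      proof -
        have "\<forall>n. \<forall>i\<in>Pi. \<rho> n \<in> VXi V Pi Vp i \<longrightarrow> cost (FX i) (\<lambda>m. \<rho> (n + m)) \<le> L (\<rho> n)"
          using rL unfolding Lambda_def by blast
        then show ?thesis using i unfolding y_def \<tau>_def by blast
      qed
      ultimately show ?thesis unfolding y_def \<tau>_def by simp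
    next
      case True
      have the_i: "(THE i. i \<in> Pi \<and> y \<in> VXi V Pi Vp i) = i"
      proof (rule the_equality)
        show "i \<in> Pi \<and> y \<in> VXi V Pi Vp i" using iy by blast
        fix i' assume "i' \<in> Pi \<and> y \<in> VXi V Pi Vp i'"
        then have a: "i' \<in> Pi" and b: "y \<in> VXi V Pi Vp i'" by simp_all
        show "i' = i" using uniq[OF a iy(1) VXi_fst[OF b] fy] .
      qed
      show ?thesis
      proof (cases "i \<in> snd y")
        case True
        have "\<tau> 0 = y" using \<tau>P unfolding Pp_def by blast
        then have "\<tau> 0 \<in> FX i" using True by (simp add: FX_iff)
        then have "cost (FX i) \<tau> = 0" by (rule cost_0)
        then show ?thesis unfolding y_def \<tau>_def by simp
      next
        case False
        define g where "g y' = Sup (cost (FX i) ` Lambda V Pi Vp E F L y')" for y'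
        have upd: "update V Pi Vp E F v0 J L n y = 1 + (INF y'\<in>{y'. (y, y') \<in> EG}. g y')"
          using \<open>y \<in> Vge V Pi E F v0 J n\<close> False
          by (simp only: update_def Let_def the_i if_True if_False g_def simp_thms)
        obtain y1 where y1: "(y, y1) \<in> EG" using succ_ex[OF yv] by blast
        have "(INF y'\<in>{y'. (y, y') \<in> EG}. g y') \<in> g ` {y'. (y, y') \<in> EG}"
        proof (rule Inf_enat_in)
          show "g ` {y'. (y, y') \<in> EG} \<noteq> {}" using y1 by blast
        qed
        then obtain y' where y'0: "y' \<in> {y'. (y, y') \<in> EG}" and y'2: "(INF y'\<in>{y'. (y, y') \<in> EG}. g y') = g y'"
          by (rule imageE)
        have y'1: "(y, y') \<in> EG" using y'0 by simp
        note y' = y'1 y'2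
        obtain \<pi> where \<pi>: "\<pi> \<in> P y'" "cost (FX i) \<tau> \<le> eSuc (cost (FX i) \<pi>)"
          using P_key[OF yv \<tau>P iy(1) fy False y'(1)] by blast
        have "\<pi> \<in> Lambda V Pi Vp E F L y'" using IH edge_VX[OF y'(1)] \<pi>(1) by blast
        then have "cost (FX i) \<pi> \<le> g y'" unfolding g_def by (rule SUP_upper)
        then have "eSuc (cost (FX i) \<pi>) \<le> eSuc (g y')" by simp
        then have "cost (FX i) \<tau> \<le> eSuc (g y')" using \<pi>(2) by (rule order_trans[rotated])
        then have "cost (FX i) \<tau> \<le> update V Pi Vp E F v0 J L n y" unfolding upd y'(2) plus_1_eSuc .
        then show ?thesis unfolding y_def \<tau>_def .
      qed
    qed
  qed
  show ?thesis unfolding Lambda_def using P_play[OF x \<rho>] co by blast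
qed

lemma P_lam: "\<forall>x\<in>VX V Pi. P x \<subseteq> Lambda V Pi Vp E F (lam V Pi Vp E F v0 J k) x"
proof (induction k)
  case 0
  then show ?case using P_lam0 by (auto simp: lam_0)
next
  case (Suc k)
  show ?case unfolding lam_Suc using P_update[OF Suc.IH] by blast
qed

lemma play_VX: "playX Pi E F \<rho> \<Longrightarrow> \<rho> 0 \<in> VX V Pi \<Longrightarrow> \<rho> n \<in> VX V Pi"
proof (cases n)
  case (Suc m)
  assume "playX Pi E F \<rho>"
  then have "(\<rho> m, \<rho> (Suc m)) \<in> EG" unfolding playX_def by blast
  then show ?thesis using Suc edge_VX by blast
qed simp

lemma main:
  assumes u: "u \<in> VX V Pi" and i: "i \<in> Pi" and that: "P u \<subseteq> Lambda V Pi Vp E F L u"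
  shows "\<exists>\<rho>\<in>Lambda V Pi Vp E F L u. cost (FX i) \<rho> = (SUP \<rho>'\<in>Lambda V Pi Vp E F L u. cost (FX i) \<rho>')"
proof -
  define \<Lambda> where "\<Lambda> = Lambda V Pi Vp E F L u"
  define A where "A = cost (FX i) ` \<Lambda>"
  have ne: "\<Lambda> \<noteq> {}" using that P_ne[OF u] unfolding \<Lambda>_def by blast
  then have Ane: "A \<noteq> {}" unfolding A_def by blast
  show ?thesis
  proof (cases "finite A")
    case True
    then have "Sup A = Max A" using Ane by (simp add: Sup_enat_def)
    moreover have "Max A \<in> A" using True Ane by (rule Max_in)
    ultimately have "Sup A \<in> A" by simp
    then obtain \<rho> where "\<rho> \<in> \<Lambda>" "Sup A = cost (FX i) \<rho>" unfolding A_def by (rule imageE)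
    then show ?thesis unfolding A_def \<Lambda>_def by metis
  next
    case False
    define S where "S m = {\<rho> \<in> \<Lambda>. enat m \<le> cost (FX i) \<rho>}" for m
    have "\<exists>r. \<forall>m. \<exists>\<rho>\<in>S m. \<forall>j<m. \<rho> j = r j"
    proof (rule konig[OF finVX])
      show "S m \<noteq> {}" for m
      proof
        assume "S m = {}"
        have "\<forall>a\<in>A. a \<le> enat m"
        proof
          fix a assume "a \<in> A"
          then obtain \<rho> where \<rho>: "\<rho> \<in> \<Lambda>" "a = cost (FX i) \<rho>" unfolding A_def by blast
          have "\<rho> \<notin> S m" using \<open>S m = {}\<close> by blast
          then have "\<not> enat m \<le> a" using \<rho> unfolding S_def by blast
          then show "a \<le> enat m" by simp
        qed
        then have "finite A" by (intro finite_enat_bounded) blast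
        then show False using False by simp
      qed
      show "S (Suc m) \<subseteq> S m" for m
      proof
        fix \<rho> assume "\<rho> \<in> S (Suc m)"
        then have a: "\<rho> \<in> \<Lambda>" "enat (Suc m) \<le> cost (FX i) \<rho>" unfolding S_def by blast+
        have "enat m \<le> enat (Suc m)" by simp
        then have "enat m \<le> cost (FX i) \<rho>" using a(2) by (rule order_trans)
        then show "\<rho> \<in> S m" using a(1) unfolding S_def by blast
      qed
      show "\<rho> n \<in> VX V Pi" if "\<rho> \<in> S m" for m \<rho> n
      proof -
        have "\<rho> \<in> Lambda V Pi Vp E F L u" using that unfolding S_def \<Lambda>_def by blast
        then have "playX Pi E F \<rho>" "\<rho> 0 = u" unfolding Lambda_def by auto
        then show ?thesis using play_VX u by simp
      qed
    qed
    then obtain r where r: "\<forall>m. \<exists>\<rho>\<in>S m. \<forall>j<m. \<rho> j = r j" by blast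
    have "\<forall>m. \<exists>\<rho>\<in>Lambda V Pi Vp E F L u. \<forall>j<m. \<rho> j = r j"
      using r unfolding S_def \<Lambda>_def by blast
    then have rL: "r \<in> \<Lambda>" unfolding \<Lambda>_def by (rule Lambda_closed)
    have "\<forall>k. r k \<notin> FX i"
    proof
      fix k
      obtain \<rho> where \<rho>: "\<rho> \<in> S (Suc k)" "\<forall>j<Suc k. \<rho> j = r j" using r by blast
      have "\<rho> k \<notin> FX i"
      proof
        assume "\<rho> k \<in> FX i"
        then have "cost (FX i) \<rho> \<le> enat k" unfolding cost_le_iff by blast
        moreover have "enat (Suc k) \<le> cost (FX i) \<rho>" using \<rho>(1) unfolding S_def by blast
        ultimately have "enat (Suc k) \<le> enat k" by (rule order_trans[rotated])
        then show False by simp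
      qed
      then show "r k \<notin> FX i" using \<rho>(2) by simp
    qed
    then have "cost (FX i) r = \<infinity>" by (simp add: cost_inf_iff)
    moreover have "Sup A = \<infinity>" using False Ane by (simp add: Sup_enat_def)
    ultimately have "cost (FX i) r = Sup A" by simp
    then show ?thesis using rL unfolding A_def \<Lambda>_def by blast
  qed
qed

end


theorem corollary2p12:
  fixes Pi :: "'p set" and V :: "'v set" and Vp :: "'p \<Rightarrow> 'v set"
    and E :: "('v \<times> 'v) set" and F :: "'p \<Rightarrow> 'v set" and v0 :: 'v
    and J :: "nat \<Rightarrow> 'p set"
  assumes "arena Pi V Vp E"
    and "\<forall>i\<in>Pi. F i \<subseteq> V"
    and "v0 \<in> V"
    and "valid_order Pi E F v0 J"
  shows "\<forall>k. \<forall>u\<in>VX V Pi. \<forall>i\<in>Pi.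
           \<exists>\<rho>\<in>Lambda V Pi Vp E F (lam V Pi Vp E F v0 J k) u.
             cost (FX i) \<rho> = (SUP \<rho>'\<in>Lambda V Pi Vp E F (lam V Pi Vp E F v0 J k) u. cost (FX i) \<rho>')"
proof (intro allI ballI)
  fix k u i
  assume u: "u \<in> VX V Pi" and i: "i \<in> Pi"
  interpret G Pi V Vp E F using assms(1) by unfold_locales
  show "\<exists>\<rho>\<in>Lambda V Pi Vp E F (lam V Pi Vp E F v0 J k) u.
             cost (FX i) \<rho> = (SUP \<rho>'\<in>Lambda V Pi Vp E F (lam V Pi Vp E F v0 J k) u. cost (FX i) \<rho>')"
    using main[OF u i] P_lam u by blast
qed

end
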